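(* Let $f,g,\ell$ be nonnegative integers, $\mathcal{F}\in\mathbb{R}^{\alpha_1\times\cdots\times\alpha_{f+\ell}}$, $\mathcal{G}\in\mathbb{R}^{\beta_1\times\cdots\times\beta_{g+\ell}}$, $\mathbf{p},\mathbf{q}$ permutations of $1:f+\ell$ and $1:g+\ell$, and $\mathbf{r}=\mathbf{p}(1:f)$, $\boldsymbol{\lambda}=\mathbf{p}(f+1:f+\ell)$, $\boldsymbol{\psi}=\mathbf{q}(1:\ell)$, $\mathbf{c}=\mathbf{q}(\ell+1:\ell+g)$, with $\boldsymbol{\alpha}(\boldsymbol{\lambda})=\boldsymbol{\beta}(\boldsymbol{\psi})$. Let $\mathcal{H}\in\mathbb{R}^{\alpha_{r_1}\times\cdots\times\alpha_{r_f}\times\beta_{c_1}\times\cdots\times\beta_{c_g}}$ be given by $\mathcal{H}(\mathbf{i},\mathbf{j})=\sum_{\mathbf{k}=\mathbf{1}}^{\boldsymbol{\alpha}(\boldsymbol{\lambda})}\mathcal{F}^{<\mathbf{p}>}(\mathbf{i},\mathbf{k})\,\mathcal{G}^{<\mathbf{q}>}(\mathbf{k},\mathbf{j})$ for $\mathbf{1}\le\mathbf{i}\le\boldsymbol{\alpha}(\mathbf{r})$, $\mathbf{1}\le\mathbf{j}\le\boldsymbol{\beta}(\mathbf{c})$. Let $\mathbf{S}=\{\mathbf{s}^{(1)},\ldots,\mathbf{s}^{(f+\ell)}\}$ be a blocking of $\mathcal{F}$ and set $\mathbf{R}=\{\mathbf{s}^{(r_1)},\ldots,\mathbf{s}^{(r_f)}\}$,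 $\boldsymbol{\Lambda}=\{\mathbf{s}^{(\lambda_1)},\ldots,\mathbf{s}^{(\lambda_\ell)}\}$. Let $\mathbf{T}=\{\mathbf{t}^{(1)},\ldots,\mathbf{t}^{(g+\ell)}\}$ be a blocking of $\mathcal{G}$ and set $\boldsymbol{\Psi}=\{\mathbf{t}^{(\psi_1)},\ldots,\mathbf{t}^{(\psi_\ell)}\}$, $\mathbf{C}=\{\mathbf{t}^{(c_1)},\ldots,\mathbf{t}^{(c_g)}\}$. If $\mathbf{s}^{(\lambda_k)}=\mathbf{t}^{(\psi_k)}$ for $k=1,\ldots,\ell$, then, regarding $\mathcal{H}$ as blocked by $\mathbf{R}$ in modes $1$ through $f$ and by $\mathbf{C}$ in modes $f+1$ through $f+g$ (so that $\mathbf{R}$ is a blocking for modes $1,\ldots,f$ of $\mathcal{H}$ and $\mathbf{C}$ a blocking for modes $f+1,\ldots,f+g$), \[ \mathcal{H}_{\mathbf{R}\times\mathbf{C}}=\mathcal{F}_{\mathbf{R}\times\boldsymbol{\Lambda}}\cdot\mathcal{G}_{\boldsymbol{\Psi}\times\mathbf{C}}, \] where $\mathcal{F}_{\mathbf{R}\times\boldsymbol{\Lambda}}=P_{\mathbf{R}}\mathcal{F}_{\mathbf{r}\times\boldsymbol{\lambda}}P_{\boldsymbol{\Lambda}}^T$, $\mathcal{G}_{\boldsymbol{\Psi}\times\mathbf{C}}=P_{\boldsymbol{\Psi}}\mathcal{G}_{\boldsymbol{\psi}\times\mathbf{c}}P_{\mathbf{C}}^T$, and $\mathcal{H}_{\m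athbf{R}\times\mathbf{C}}=P_{\mathbf{R}}\mathcal{H}_{[1:f]\times[f+1:f+g]}P_{\mathbf{C}}^T$.
   Context: For an integer vector $\mathbf{v}$ and index vector $\mathbf{s}$, $\mathbf{v}(\mathbf{s})=(v_{s_1},v_{s_2},\ldots)$; index inequalities are componentwise; $\sum_{\mathbf{k}=\mathbf{1}}^{\mathbf{n}}$ is the nested sum over all $\mathbf{1}\le\mathbf{k}\le\mathbf{n}$. $\mathrm{ivec}(\mathbf{i},\mathbf{n})=i_1+(i_2-1)n_1+\cdots+(i_d-1)n_1\cdots n_{d-1}$; $\mathrm{vec}(\mathcal{X})$ has entry $\mathrm{ivec}(\mathbf{i},\mathbf{n})$ equal to $\mathcal{X}(\mathbf{i})$. The $\mathbf{p}$-transpose is $\mathcal{X}^{<\mathbf{p}>}(i_{p_1},\ldots,i_{p_d})=\mathcal{X}(i_1,\ldots,i_d)$. For $\mathbf{r}=\mathbf{p}(1:e)$, $\mathbf{c}=\mathbf{p}(e+1:d)$ ($0\le e\le d$), the unfolding $\mathcal{X}_{\mathbf{r}\times\mathbf{c}}$ is the matrix with $(\alpha,\beta)$ entry $\mathcal{X}^{<\mathbf{p}>}(i_1,\ldots,i_e,j_1,\ldots,j_{d-e})$, $\alpha=\mathrm{ivec}(\mathbf{i},\mathbf{n}(\mathbf{r}))$, $\beta=\mathrm{ivec}(\mathbf{j},\mathbf{n}(\mathbf{c}))$ (a column vector $\mathrm{vec}(\mathcal{X}^{<\mathbf{p}>})$ if $\mathbf{c}=\emptyset$, a row vector $\mathrm{vec}(\mathcal{X}^{<\mathbf{p}>})^T$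 if $\mathbf{r}=\emptyset$). A blocking of a tensor in $\mathbb{R}^{n_1\times\cdots\times n_d}$ is a collection $\{\mathbf{m}^{(1)},\ldots,\mathbf{m}^{(d)}\}$, each $\mathbf{m}^{(k)}=[m^{(k)}_1,\ldots,m^{(k)}_{b_k}]$ a vector of positive integers summing to $n_k$; block $\mathbf{i}$ ($\mathbf{1}\le\mathbf{i}\le\mathbf{b}$) is the subtensor with index ranges $m^{(k)}_1+\cdots+m^{(k)}_{i_k-1}+1:m^{(k)}_1+\cdots+m^{(k)}_{i_k}$ in mode $k$; $\mathrm{vec}_{\mathbf{M}}(\mathcal{X})$ stacks the vecs of the blocks in order of increasing $\mathrm{ivec}(\mathbf{i},\mathbf{b})$. For a blocking $\mathbf{K}$ of tensors of some size $\mathbf{n}$, $P_{\mathbf{K}}$ denotes the unique permutation matrix with $P_{\mathbf{K}}\mathrm{vec}(\mathcal{X})=\mathrm{vec}_{\mathbf{K}}(\mathcal{X})$ for all tensors $\mathcal{X}$ of size $\mathbf{n}$; here $P_{\mathbf{R}}$, $P_{\boldsymbol{\Lambda}}$, $P_{\boldsymbol{\Psi}}$, $P_{\mathbf{C}}$ refer to tensors of sizes $\boldsymbol{\alpha}(\mathbf{r})$, $\boldsymbol{\alpha}(\boldsymbol{\lambda})$, $\boldsymbol{\beta}(\boldsymbol{\psi})$, $\boldsymbol{\beta}(\mathbf{c})$ respectively. *)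

theory Defs
  imports "HOL-Combinatorics.Permutations" "Jordan_Normal_Form.Matrix"
begin

(* Tensors of order d and size n = [n_1,...,n_d] are functions on (1-based) index lists;
   only entries at valid indices (idx_set n) are meaningful. *)
type_synonym tensor = "nat list \<Rightarrow> real"

definition idx_set :: "nat list \<Rightarrow> nat list set" where
  "idx_set n = {i. length i = length n \<and> (\<forall>k<length n. 1 \<le> i!k \<and> i!k \<le> n!k)}"

definition ivec :: "nat list \<Rightarrow> nat list \<Rightarrow> nat" where
  "ivec i n = 1 + (\<Sum>k<length i. (i!k - 1) * prod_list (take k n))"

definition univec :: "nat \<Rightarrow> nat list \<Rightarrow> nat list" where
  "univec a n = (THE i. i \<in> idx_set n \<and> ivec i n = a)"

definition sel :: "'a list \<Rightarrow> nat list \<Rightarrow> 'a list" where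
  "sel v s = map (\<lambda>k. v ! (k - 1)) s"

(* vec(X) for X of size n: entry ivec(i,n) (1-based; JNF vectors are 0-based) is X(i) *)
definition tvec :: "tensor \<Rightarrow> nat list \<Rightarrow> real vec" where
  "tvec X n = vec (prod_list n) (\<lambda>a. X (univec (a + 1) n))"

(* p-transpose: X^<p>(i_{p_1},...,i_{p_d}) = X(i_1,...,i_d) *)
definition ptrans :: "tensor \<Rightarrow> nat list \<Rightarrow> tensor" where
  "ptrans X p j = X (THE i. length i = length p \<and> map (\<lambda>k. i ! (k - 1)) p = j)"

definition is_perm :: "nat list \<Rightarrow> nat \<Rightarrow> bool" where
  "is_perm p d \<longleftrightarrow> distinct p \<and> set p = {1..d}"

definition tunfold :: "tensor \<Rightarrow> nat list \<Rightarrow> nat list \<Rightarrow> nat list \<Rightarrow> real mat" where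
  "tunfold X n r c = mat (prod_list (sel n r)) (prod_list (sel n c))
     (\<lambda>(a, b). ptrans X (r @ c) (univec (a + 1) (sel n r) @ univec (b + 1) (sel n c)))"

definition blocking :: "nat list list \<Rightarrow> nat list \<Rightarrow> bool" where
  "blocking M n \<longleftrightarrow> length M = length n \<and>
     (\<forall>k<length n. (\<forall>x\<in>set (M!k). 0 < x) \<and> sum_list (M!k) = n!k)"

definition block_size :: "nat list list \<Rightarrow> nat list \<Rightarrow> nat list" where
  "block_size M i = map (\<lambda>k. M!k ! (i!k - 1)) [0..<length M]"

definition block :: "tensor \<Rightarrow> nat list list \<Rightarrow> nat list \<Rightarrow> tensor" where
  "block X M i = (\<lambda>j. X (map (\<lambda>k. sum_list (take (i!k - 1) (M!k)) + j!k) [0..<length M]))"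

definition tvec_blk :: "tensor \<Rightarrow> nat list list \<Rightarrow> real vec" where
  "tvec_blk X M = vec_of_list (concat (map (\<lambda>a.
      list_of_vec (tvec (block X M (univec a (map length M)))
                         (block_size M (univec a (map length M)))))
      [1..<prod_list (map length M) + 1]))"

definition perm_mat :: "real mat \<Rightarrow> nat \<Rightarrow> bool" where
  "perm_mat P N \<longleftrightarrow> (\<exists>\<sigma>. \<sigma> permutes {..<N} \<and>
      P = mat N N (\<lambda>(a, b). if b = \<sigma> a then 1 else 0))"

definition Pmat :: "nat list \<Rightarrow> nat list list \<Rightarrow> real mat" where
  "Pmat n K = (THE P. perm_mat P (prod_list n) \<and> (\<forall>X. P *\<^sub>v tvec X n = tvec_blk X K))"

definition blk_unfolding ::
  "tensor \<Rightarrow> nat list \<Rightarrow> nat list list \<Rightarrow> nat list \<Rightarrow> nat list \<Rightarrow> real mat" where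
  "blk_unfolding X n S r c =
     Pmat (sel n r) (sel S r) * tunfold X n r c * transpose_mat (Pmat (sel n c) (sel S c))"

end

theory Submission
  imports Defs
begin

lemma idx_set_Nil[simp]: "idx_set [] = {[]}"
  by (auto simp: idx_set_def)

lemma idx_set_Cons: "idx_set (m#n) = {x#i | x i. 1 \<le> x \<and> x \<le> m \<and> i \<in> idx_set n}"
proof -
  have "j \<in> idx_set (m#n) \<longleftrightarrow> (\<exists>x i. j = x#i \<and> 1 \<le> x \<and> x \<le> m \<and> i \<in> idx_set n)" for j
    by (cases j) (auto simp: idx_set_def nth_Cons split: nat.splits)
  thus ?thesis by blast
qed

lemma ivec_Cons: "1 \<le> x \<Longrightarrow> ivec (x#i) (m#n) = x + m * (ivec i n - 1)"
proof -
  assume x: "1 \<le> x"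
  have "ivec (x#i) (m#n) = 1 + ((x - 1) + (\<Sum>k<length i. (i!k - 1) * (m * prod_list (take k n))))"
    unfolding ivec_def length_Cons sum.lessThan_Suc_shift by simp
  also have "\<dots> = x + m * (\<Sum>k<length i. (i!k - 1) * prod_list (take k n))"
    using x by (simp add: sum_distrib_left mult.left_commute)
  finally show ?thesis by (simp add: ivec_def)
qed

lemma ivec_ge1: "1 \<le> ivec i n" by (simp add: ivec_def)

lemma divmod_inj: "x < (m::nat) \<Longrightarrow> x' < m \<Longrightarrow> x + m*a = x' + m*a' \<Longrightarrow> x = x' \<and> a = a'"
proof -
  assume h: "x < m" "x' < m" "x + m*a = x' + m*a'"
  have 1: "x = (x + m*a) mod m" "a = (x + m*a) div m" using h(1) by simp_all
  have 2: "x' = (x' + m*a') mod m" "a' = (x' + m*a') div m" using h(2) by simp_all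
  show ?thesis using 1 2 h(3) by metis
qed

lemma ivec_inj_img: "inj_on (\<lambda>i. ivec i n) (idx_set n) \<and> (\<lambda>i. ivec i n) ` idx_set n = {1..prod_list n}"
proof (induction n)
  case Nil
  then show ?case by (auto simp: ivec_def)
next
  case (Cons m n)
  have inj: "inj_on (\<lambda>i. ivec i n) (idx_set n)" and img: "(\<lambda>i. ivec i n) ` idx_set n = {1..prod_list n}"
    using Cons by auto
  have r1: "inj_on (\<lambda>i. ivec i (m#n)) (idx_set (m#n))"
  proof (rule inj_onI)
    fix j j' assume "j \<in> idx_set (m#n)" "j' \<in> idx_set (m#n)" and e: "ivec j (m#n) = ivec j' (m#n)"
    then obtain x i x' i' where j: "j = x#i" "1 \<le> x" "x \<le> m" "i \<in> idx_set n"
      and j': "j' = x'#i'" "1 \<le> x'" "x' \<le> m" "i' \<in> idx_set n" by (auto simp: idx_set_Cons)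
    have "(x - 1) + m * (ivec i n - 1) = (x' - 1) + m * (ivec i' n - 1)"
      using e j j' by (simp add: ivec_Cons)
    then have "x - 1 = x' - 1 \<and> ivec i n - 1 = ivec i' n - 1"
      using j j' by (intro divmod_inj) auto
    then have "x = x'" "ivec i n = ivec i' n" using j j' ivec_ge1[of i n] ivec_ge1[of i' n] by auto
    then show "j = j'" using inj j j' by (auto dest: inj_onD)
  qed
  have r2: "(\<lambda>i. ivec i (m#n)) ` idx_set (m#n) = {1..prod_list (m#n)}"
  proof
    show "(\<lambda>i. ivec i (m#n)) ` idx_set (m#n) \<subseteq> {1..prod_list (m#n)}"
    proof
      fix z assume "z \<in> (\<lambda>i. ivec i (m#n)) ` idx_set (m#n)"
      then obtain x i where j: "z = ivec (x#i) (m#n)" "1 \<le> x" "x \<le> m" "i \<in> idx_set n"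
        by (auto simp: idx_set_Cons)
      have "ivec i n \<in> {1..prod_list n}" using img j by auto
      then have "ivec i n - 1 + 1 \<le> prod_list n" by auto
      then have "m * (ivec i n - 1) + m \<le> m * prod_list n"
        by (metis add_mult_distrib2 mult.right_neutral mult_le_mono2)
      then show "z \<in> {1..prod_list (m#n)}" using j by (simp add: ivec_Cons)
    qed
  next
    show "{1..prod_list (m#n)} \<subseteq> (\<lambda>i. ivec i (m#n)) ` idx_set (m#n)"
    proof
      fix z assume z: "z \<in> {1..prod_list (m#n)}"
      then have mpos: "0 < m" by (auto intro: ccontr)
      define x where "x = (z - 1) mod m + 1"
      define a where "a = (z - 1) div m"
      have "z - 1 < m * prod_list n" using z by auto
      then have "a < prod_list n" unfolding a_def using mpos by (simp add: div_less_iff_less_mult mult.commute)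
      then have "a + 1 \<in> {1..prod_list n}" by auto
      then obtain i where i: "i \<in> idx_set n" "ivec i n = a + 1" using img by (metis imageE)
      have x: "1 \<le> x" "x \<le> m" unfolding x_def using mpos
        by (auto simp: Suc_le_eq)
      have "ivec (x#i) (m#n) = z" using x i z
        by (simp add: ivec_Cons x_def a_def) 
      moreover have "x#i \<in> idx_set (m#n)" using x i by (auto simp: idx_set_Cons)
      ultimately show "z \<in> (\<lambda>i. ivec i (m#n)) ` idx_set (m#n)" by (metis imageI)
    qed
  qed
  show ?case using r1 r2 by blast
qed

lemma ivec_inj: "inj_on (\<lambda>i. ivec i n) (idx_set n)" using ivec_inj_img by blast
lemma ivec_img: "(\<lambda>i. ivec i n) ` idx_set n = {1..prod_list n}" using ivec_inj_img by blast

lemma finite_idx_set: "finite (idx_set n)"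
proof (rule finite_imageD[of "\<lambda>i. ivec i n"])
  show "finite ((\<lambda>i. ivec i n) ` idx_set n)" unfolding ivec_img by simp
qed (rule ivec_inj)

lemma card_idx_set: "card (idx_set n) = prod_list n"
  using card_image[OF ivec_inj[of n]] unfolding ivec_img by simp

lemma ivec_in: "i \<in> idx_set n \<Longrightarrow> ivec i n \<in> {1..prod_list n}"
  using ivec_img[of n] by blast

lemma univec_props: assumes "a \<in> {1..prod_list n}"
  shows "univec a n \<in> idx_set n \<and> ivec (univec a n) n = a"
proof -
  have "a \<in> (\<lambda>i. ivec i n) ` idx_set n" using assms unfolding ivec_img .
  then obtain i where i: "i \<in> idx_set n" "ivec i n = a" by (rule imageE) simp
  have "\<exists>!i. i \<in> idx_set n \<and> ivec i n = a"
  proof (rule ex1I[of _ i])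
    show "i \<in> idx_set n \<and> ivec i n = a" using i by simp
    fix i' assume "i' \<in> idx_set n \<and> ivec i' n = a"
    then show "i' = i" using i inj_onD[OF ivec_inj[of n]] by simp
  qed
  then show ?thesis unfolding univec_def by (rule theI')
qed

lemma univec_ivec: assumes "i \<in> idx_set n" shows "univec (ivec i n) n = i"
proof -
  have "univec (ivec i n) n \<in> idx_set n \<and> ivec (univec (ivec i n) n) n = ivec i n"
    using univec_props[OF ivec_in[OF assms]] .
  then show ?thesis using inj_onD[OF ivec_inj[of n]] assms by simp
qed

lemma univec_in: "a < prod_list n \<Longrightarrow> univec (a+1) n \<in> idx_set n"
  using univec_props[of "a+1" n] by simp

lemma ivec_univec: "a < prod_list n \<Longrightarrow> ivec (univec (a+1) n) n = a + 1"
  using univec_props[of "a+1" n] by simp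

lemma ivec_univec': "a < prod_list n \<Longrightarrow> ivec (univec (Suc a) n) n = Suc a"
  using ivec_univec by simp

lemma univec_bij: "bij_betw (\<lambda>a. univec (a+1) n) {..<prod_list n} (idx_set n)"
proof (rule bij_betwI[where g = "\<lambda>i. ivec i n - 1"])
  show "(\<lambda>a. univec (a+1) n) \<in> {..<prod_list n} \<rightarrow> idx_set n"
    using univec_in by simp
  show "(\<lambda>i. ivec i n - 1) \<in> idx_set n \<rightarrow> {..<prod_list n}"
  proof
    fix i assume "i \<in> idx_set n" then have "ivec i n \<in> {1..prod_list n}" by (rule ivec_in)
    then show "ivec i n - 1 \<in> {..<prod_list n}" by auto
  qed
  show "univec (ivec x n - 1 + 1) n = x" if "x \<in> idx_set n" for x
    using that univec_ivec ivec_ge1[of x n] by simp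
  show "ivec (univec (y + 1) n) n - 1 = y" if "y \<in> {..<prod_list n}" for y
    using that ivec_univec by simp
qed

lemma sum_take_mono: "a \<le> b \<Longrightarrow> sum_list (take a (m::nat list)) \<le> sum_list (take b m)"
proof -
  assume "a \<le> b"
  then have "take b m = take a m @ take (b - a) (drop a m)"
    by (metis le_add_diff_inverse take_add)
  then show ?thesis by simp
qed

lemma sum_take_Suc: "x < length m \<Longrightarrow> sum_list (take (Suc x) (m::nat list)) = sum_list (take x m) + m ! x"
  by (simp add: take_Suc_conv_app_nth)

lemma part_in: "1 \<le> x \<Longrightarrow> x \<le> length m \<Longrightarrow> 1 \<le> y \<Longrightarrow> y \<le> m!(x-1) \<Longrightarrow>
   sum_list (take (x-1) (m::nat list)) + y \<in> {1..sum_list m}"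
proof -
  assume h: "1 \<le> x" "x \<le> length m" "1 \<le> y" "y \<le> m!(x-1)"
  have "sum_list (take (x-1) m) + y \<le> sum_list (take x m)"
    using h sum_take_Suc[of "x-1" m] by simp
  also have "\<dots> \<le> sum_list m" using sum_take_mono[of x "length m" m] h by simp
  finally show ?thesis using h by simp
qed

lemma part_inj: "1 \<le> x \<Longrightarrow> x \<le> length m \<Longrightarrow> 1 \<le> y \<Longrightarrow> y \<le> m!(x-1) \<Longrightarrow>
   1 \<le> x' \<Longrightarrow> x' \<le> length m \<Longrightarrow> 1 \<le> y' \<Longrightarrow> y' \<le> m!(x'-1) \<Longrightarrow>
   sum_list (take (x-1) (m::nat list)) + y = sum_list (take (x'-1) m) + y' \<Longrightarrow> x = x' \<and> y = y'"
proof -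
  assume h: "1 \<le> x" "x \<le> length m" "1 \<le> y" "y \<le> m!(x-1)"
     "1 \<le> x'" "x' \<le> length m" "1 \<le> y'" "y' \<le> m!(x'-1)"
     and e: "sum_list (take (x-1) (m::nat list)) + y = sum_list (take (x'-1) m) + y'"
  have lt: False if "1 \<le> u" "u \<le> length m" "1 \<le> v" "v \<le> m!(u-1)"
     "1 \<le> u'" "u' \<le> length m" "1 \<le> v'" 
     "sum_list (take (u-1) m) + v = sum_list (take (u'-1) m) + v'" "u < u'" for u v u' v'
  proof -
    have "sum_list (take (u-1) m) + v \<le> sum_list (take u m)"
      using that sum_take_Suc[of "u-1" m] by simp
    also have "\<dots> \<le> sum_list (take (u'-1) m)" using that sum_take_mono by simp
    finally show False using that by simp
  qed
  have "x = x'"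
  proof (rule ccontr)
    assume "x \<noteq> x'"
    then have "x < x' \<or> x' < x" by auto
    then show False using lt[of x y x' y'] lt[of x' y' x y] h e by auto
  qed
  then show ?thesis using e by simp
qed

lemma part_surj: assumes "z \<in> {1..sum_list (m::nat list)}"
  shows "\<exists>x y. 1 \<le> x \<and> x \<le> length m \<and> 1 \<le> y \<and> y \<le> m!(x-1) \<and> z = sum_list (take (x-1) m) + y"
proof -
  define x where "x = (LEAST x. z \<le> sum_list (take x m))"
  have ex: "z \<le> sum_list (take (length m) m)" using assms by simp
  have x1: "z \<le> sum_list (take x m)" unfolding x_def by (rule LeastI[where P="\<lambda>x. z \<le> sum_list (take x m)", OF ex])
  have x2: "x \<le> length m" unfolding x_def by (rule Least_le[where P="\<lambda>x. z \<le> sum_list (take x m)", OF ex])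
  have "x \<noteq> 0"
  proof
    assume "x = 0" then show False using x1 assms by simp
  qed
  then have xp: "1 \<le> x" by simp
  have x3: "\<not> z \<le> sum_list (take (x-1) m)"
  proof
    assume "z \<le> sum_list (take (x-1) m)"
    then have "x \<le> x - 1" unfolding x_def by (rule Least_le[where P="\<lambda>x. z \<le> sum_list (take x m)"])
    then show False using xp by simp
  qed
  define S where "S = sum_list (take (x-1) m)"
  have "sum_list (take x m) = S + m!(x-1)"
    using sum_take_Suc[of "x-1" m] xp x2 unfolding S_def by simp
  then have "1 \<le> z - S" "z - S \<le> m!(x-1)" "z = S + (z - S)" using x1 x3 unfolding S_def[symmetric] by linarith+
  then show ?thesis using xp x2 unfolding S_def by blast
qed

definition glob :: "nat list list \<Rightarrow> nat list \<Rightarrow> nat list \<Rightarrow> nat list" where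
  "glob K i j = map (\<lambda>k. sum_list (take (i!k - 1) (K!k)) + j!k) [0..<length K]"

lemma idx_set_iff: "i \<in> idx_set n \<longleftrightarrow> length i = length n \<and> (\<forall>k<length n. 1 \<le> i!k \<and> i!k \<le> n!k)"
  by (simp add: idx_set_def)

lemma idx_b: "i \<in> idx_set (map length K) \<longleftrightarrow> length i = length K \<and> (\<forall>k<length K. 1 \<le> i!k \<and> i!k \<le> length (K!k))"
  by (simp add: idx_set_iff)

lemma idx_bs: "j \<in> idx_set (block_size K i) \<longleftrightarrow> length j = length K \<and> (\<forall>k<length K. 1 \<le> j!k \<and> j!k \<le> K!k!(i!k-1))"
  by (simp add: idx_set_iff block_size_def)

lemma glob_in: assumes K: "blocking K n" and i: "i \<in> idx_set (map length K)"
  and j: "j \<in> idx_set (block_size K i)" shows "glob K i j \<in> idx_set n"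
proof -
  have lK: "length K = length n" using K by (simp add: blocking_def)
  have "sum_list (take (i!k - 1) (K!k)) + j!k \<in> {1..sum_list (K!k)}" if k: "k < length K" for k
  proof -
    have "1 \<le> i!k \<and> i!k \<le> length (K!k)" using i k unfolding idx_b by blast
    moreover have "1 \<le> j!k \<and> j!k \<le> K!k!(i!k-1)" using j k unfolding idx_bs by blast
    ultimately show ?thesis by (intro part_in) auto
  qed
  then have "\<forall>k<length n. 1 \<le> glob K i j ! k \<and> glob K i j ! k \<le> n!k" using K lK 
    by (simp add: glob_def blocking_def)
  then show ?thesis unfolding idx_set_iff by (simp add: glob_def lK)
qed

lemma glob_inj: assumes i: "i \<in> idx_set (map length K)"
  and j: "j \<in> idx_set (block_size K i)" and i': "i' \<in> idx_set (map length K)"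
  and j': "j' \<in> idx_set (block_size K i')" and e: "glob K i j = glob K i' j'"
  shows "i = i' \<and> j = j'"
proof -
  have "i!k = i'!k \<and> j!k = j'!k" if "k < length K" for k
  proof (rule part_inj[of _ "K!k"])
    show "sum_list (take (i!k - 1) (K!k)) + j!k = sum_list (take (i'!k - 1) (K!k)) + j'!k"
      using arg_cong[OF e, of "\<lambda>l. l!k"] that by (simp add: glob_def)
  qed (use i j i' j' that in \<open>simp_all add: idx_b idx_bs\<close>)
  note h = this
  have l: "length i = length K" "length i' = length K" "length j = length K" "length j' = length K"
    using i j i' j' by (simp_all add: idx_b idx_bs)
  have "i = i'" by (rule nth_equalityI) (use l h in auto)
  moreover have "j = j'" by (rule nth_equalityI) (use l h in auto)
  ultimately show ?thesis by simp
qed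

lemma glob_surj: assumes K: "blocking K n" and g: "g \<in> idx_set n"
  shows "\<exists>i j. i \<in> idx_set (map length K) \<and> j \<in> idx_set (block_size K i) \<and> g = glob K i j"
proof -
  have lK: "length K = length n" and sK: "\<forall>k<length n. sum_list (K!k) = n!k"
    using K by (auto simp: blocking_def)
  define R where "R = (\<lambda>k xy. 1 \<le> fst xy \<and> fst xy \<le> length (K!k) \<and> 1 \<le> snd xy \<and> snd xy \<le> K!k!(fst xy-1)
       \<and> g!k = sum_list (take (fst xy-1) (K!k)) + snd xy)"
  have "\<forall>k. \<exists>xy. k < length K \<longrightarrow> R k xy"
  proof
    fix k
    show "\<exists>xy. k < length K \<longrightarrow> R k xy"
    proof (cases "k < length K")
      case k: True
      have "g!k \<in> {1..sum_list (K!k)}" using g k lK sK by (auto simp: idx_set_iff)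
      from part_surj[OF this] obtain x y where "1 \<le> x \<and> x \<le> length (K!k) \<and> 1 \<le> y \<and> y \<le> K!k!(x-1)
       \<and> g!k = sum_list (take (x-1) (K!k)) + y" by blast
      then have "R k (x,y)" unfolding R_def by simp
      then show ?thesis by blast
    qed simp
  qed
  from choice[OF this] obtain P where P: "\<And>k. k < length K \<Longrightarrow> R k (P k)" by blast
  define i where "i = map (\<lambda>k. fst (P k)) [0..<length K]"
  define j where "j = map (\<lambda>k. snd (P k)) [0..<length K]"
  have "\<forall>k<length K. 1 \<le> i!k \<and> i!k \<le> length (K!k)" using P by (simp add: i_def R_def)
  then have "i \<in> idx_set (map length K)" unfolding idx_b by (simp add: i_def)
  moreover have "\<forall>k<length K. 1 \<le> j!k \<and> j!k \<le> K!k!(i!k-1)" using P by (simp add: i_def j_def R_def)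
  then have "j \<in> idx_set (block_size K i)" unfolding idx_bs by (simp add: j_def)
  moreover have "g = glob K i j"
  proof (rule nth_equalityI)
    show "length g = length (glob K i j)" using g lK by (simp add: glob_def idx_set_iff)
    fix k assume "k < length g"
    then have k: "k < length K" using g lK by (simp add: idx_set_iff)
    show "g!k = glob K i j ! k" using P[OF k] k by (simp add: i_def j_def glob_def R_def)
  qed
  ultimately show ?thesis by blast
qed

definition Lst :: "nat list list \<Rightarrow> nat list list" where
  "Lst K = concat (map (\<lambda>a. map (\<lambda>c. glob K (univec a (map length K))
        (univec (c+1) (block_size K (univec a (map length K)))))
        [0..<prod_list (block_size K (univec a (map length K)))]) [1..<prod_list (map length K) + 1])"

lemma tvec_blk_eq: "tvec_blk X K = vec_of_list (map X (Lst K))"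
  unfolding tvec_blk_def tvec_def Lst_def block_def glob_def
  by (simp add: map_concat o_def)

lemma distinct_concat_map: "distinct xs \<Longrightarrow> (\<And>x. x \<in> set xs \<Longrightarrow> distinct (h x)) \<Longrightarrow>
  (\<And>x y. x \<in> set xs \<Longrightarrow> y \<in> set xs \<Longrightarrow> x \<noteq> y \<Longrightarrow> set (h x) \<inter> set (h y) = {}) \<Longrightarrow>
  distinct (concat (map h xs))"
proof (induction xs)
  case Nil then show ?case by simp
next
  case (Cons x xs)
  have "set (h x) \<inter> set (concat (map h xs)) = {}"
  proof -
    have "set (h x) \<inter> set (h y) = {}" if "y \<in> set xs" for y
      using Cons.prems that by auto
    then show ?thesis by auto
  qed
  then show ?case using Cons by simp
qed

lemma Lst_distinct: "distinct (Lst K)"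
  unfolding Lst_def
proof (rule distinct_concat_map)
  let ?b = "map length K"
  show "distinct [1..<prod_list ?b + 1]" by simp
  fix a assume a: "a \<in> set [1..<prod_list ?b + 1]"
  then have "a \<in> {1..prod_list ?b}" by auto
  then have ua: "univec a ?b \<in> idx_set ?b" using univec_props by blast
  show "distinct (map (\<lambda>c. glob K (univec a ?b) (univec (c+1) (block_size K (univec a ?b))))
        [0..<prod_list (block_size K (univec a ?b))])"
    unfolding distinct_map
  proof
    show "inj_on (\<lambda>c. glob K (univec a ?b) (univec (c+1) (block_size K (univec a ?b))))
       (set [0..<prod_list (block_size K (univec a ?b))])"
    proof (rule inj_onI)
      fix c c' assume c: "c \<in> set [0..<prod_list (block_size K (univec a ?b))]"
        and c': "c' \<in> set [0..<prod_list (block_size K (univec a ?b))]"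
        and e: "glob K (univec a ?b) (univec (c+1) (block_size K (univec a ?b))) =
                glob K (univec a ?b) (univec (c'+1) (block_size K (univec a ?b)))"
      have "univec (c+1) (block_size K (univec a ?b)) = univec (c'+1) (block_size K (univec a ?b))"
        using glob_inj[OF ua univec_in ua univec_in e] c c' by simp
      then have "ivec (univec (c+1) (block_size K (univec a ?b))) (block_size K (univec a ?b)) =
                 ivec (univec (c'+1) (block_size K (univec a ?b))) (block_size K (univec a ?b))" by simp
      then show "c = c'" using ivec_univec c c' by simp
    qed
  qed simp
next
  let ?b = "map length K"
  fix a a' assume a: "a \<in> set [1..<prod_list ?b + 1]" and a': "a' \<in> set [1..<prod_list ?b + 1]"
    and ne: "a \<noteq> a'"
  have ua: "univec a ?b \<in> idx_set ?b" "ivec (univec a ?b) ?b = a" using univec_props[of a ?b] a by auto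
  have ua': "univec a' ?b \<in> idx_set ?b" "ivec (univec a' ?b) ?b = a'" using univec_props[of a' ?b] a' by auto
  show "set (map (\<lambda>c. glob K (univec a ?b) (univec (c+1) (block_size K (univec a ?b))))
        [0..<prod_list (block_size K (univec a ?b))]) \<inter>
      set (map (\<lambda>c. glob K (univec a' ?b) (univec (c+1) (block_size K (univec a' ?b))))
        [0..<prod_list (block_size K (univec a' ?b))]) = {}"
  proof (rule ccontr)
    assume "\<not> ?thesis"
    then obtain c c' where c: "c < prod_list (block_size K (univec a ?b))"
      and c': "c' < prod_list (block_size K (univec a' ?b))"
      and e: "glob K (univec a ?b) (univec (c+1) (block_size K (univec a ?b))) =
              glob K (univec a' ?b) (univec (c'+1) (block_size K (univec a' ?b)))"
      by auto
    have "univec a ?b = univec a' ?b"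
      using glob_inj[OF ua(1) univec_in[OF c] ua'(1) univec_in[OF c'] e] by simp
    then show False using ua(2) ua'(2) ne by simp
  qed
qed

lemma in_concat_map: "g \<in> set (concat (map h xs)) \<Longrightarrow> \<exists>a\<in>set xs. g \<in> set (h a)"
  by auto

lemma Lst_set: assumes K: "blocking K n" shows "set (Lst K) = idx_set n"
proof
  let ?b = "map length K"
  show "set (Lst K) \<subseteq> idx_set n"
  proof
    fix g assume "g \<in> set (Lst K)"
    then obtain a where a0: "a \<in> set [1..<prod_list ?b + 1]" and ga: "g \<in> set (map (\<lambda>c. glob K (univec a ?b)
        (univec (c+1) (block_size K (univec a ?b))))
        [0..<prod_list (block_size K (univec a ?b))])"
      using in_concat_map[OF \<open>g \<in> set (Lst K)\<close>[unfolded Lst_def]] by blast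
    then obtain c where c0: "c \<in> set [0..<prod_list (block_size K (univec a ?b))]"
      and g: "g = glob K (univec a ?b) (univec (c+1) (block_size K (univec a ?b)))"
      unfolding set_map by blast
    have a: "a \<in> {1..prod_list ?b}" using a0 by auto
    have c: "c < prod_list (block_size K (univec a ?b))" using c0 by simp
    have ua: "univec a ?b \<in> idx_set ?b" using univec_props[OF a] by simp
    show "g \<in> idx_set n" unfolding g by (rule glob_in[OF K ua univec_in[OF c]])
  qed
  show "idx_set n \<subseteq> set (Lst K)"
  proof
    fix g assume "g \<in> idx_set n"
    from glob_surj[OF K this] obtain i j where i: "i \<in> idx_set ?b" and j: "j \<in> idx_set (block_size K i)"
      and g: "g = glob K i j" by blast
    define a where "a = ivec i ?b"
    define c where "c = ivec j (block_size K i) - 1"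
    have a1: "a \<in> set [1..<prod_list ?b + 1]" using ivec_in[OF i] unfolding a_def by auto
    have ua: "univec a ?b = i" unfolding a_def by (rule univec_ivec[OF i])
    have c1: "c \<in> set [0..<prod_list (block_size K (univec a ?b))]" using ivec_in[OF j] unfolding c_def ua by auto
    have uc: "univec (c+1) (block_size K (univec a ?b)) = j"
      unfolding ua c_def using univec_ivec[OF j] ivec_ge1[of j "block_size K i"] by simp
    have "g \<in> set (map (\<lambda>c. glob K (univec a ?b) (univec (c+1) (block_size K (univec a ?b))))
        [0..<prod_list (block_size K (univec a ?b))])"
      using c1 uc g ua by force
    then show "g \<in> set (Lst K)" unfolding Lst_def using a1 by auto
  qed
qed

lemma Lst_len: assumes K: "blocking K n" shows "length (Lst K) = prod_list n"
  using distinct_card[OF Lst_distinct[of K]] Lst_set[OF K] card_idx_set by simp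

definition pm :: "nat \<Rightarrow> (nat \<Rightarrow> nat) \<Rightarrow> real mat" where
  "pm N \<sigma> = mat N N (\<lambda>(a, b). if b = \<sigma> a then 1 else 0)"

lemma pm_mult_vec: assumes s: "\<sigma> permutes {..<N}" and v: "dim_vec v = N"
  shows "pm N \<sigma> *\<^sub>v v = vec N (\<lambda>a. v $ \<sigma> a)"
proof (rule eq_vecI)
  fix a assume "a < dim_vec (vec N (\<lambda>a. v $ \<sigma> a))"
  then have a: "a < N" by simp
  have sa: "\<sigma> a < N" using permutes_in_image[OF s, of a] a by simp
  have "(pm N \<sigma> *\<^sub>v v) $ a = (\<Sum>b\<in>{0..<N}. (if b = \<sigma> a then 1 else 0) * v $ b)"
    using a v by (simp add: pm_def scalar_prod_def)
  also have "\<dots> = (\<Sum>b\<in>{0..<N}. if b = \<sigma> a then v $ b else 0)"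
    by (rule sum.cong) auto
  also have "\<dots> = v $ \<sigma> a" using sa by (simp add: sum.delta)
  finally show "(pm N \<sigma> *\<^sub>v v) $ a = vec N (\<lambda>a. v $ \<sigma> a) $ a" using a by simp
qed (simp add: pm_def)

lemma pm_orth: assumes s: "\<sigma> permutes {..<N}"
  shows "transpose_mat (pm N \<sigma>) * pm N \<sigma> = 1\<^sub>m N"
proof (rule eq_matI)
  fix a b assume "a < dim_row (1\<^sub>m N :: real mat)" "b < dim_col (1\<^sub>m N :: real mat)"
  then have a: "a < N" and b: "b < N" by auto
  have "(transpose_mat (pm N \<sigma>) * pm N \<sigma>) $$ (a, b) =
        (\<Sum>c\<in>{0..<N}. (if a = \<sigma> c then 1 else 0) * (if b = \<sigma> c then 1 else 0))"
    using a b by (simp add: pm_def scalar_prod_def)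
  also have "\<dots> = (\<Sum>c\<in>{..<N}. (\<lambda>d. (if a = d then 1 else 0) * (if b = d then 1 else 0)) (\<sigma> c))"
    by (simp add: atLeast0LessThan)
  also have "\<dots> = (\<Sum>d\<in>{..<N}. (if a = d then 1 else 0) * (if b = d then 1 else 0 :: real))"
    by (rule sum.reindex_bij_betw[OF permutes_imp_bij[OF s]])
  also have "\<dots> = (\<Sum>d\<in>{..<N}. if d = a then (if b = a then 1 else 0) else 0 :: real)"
    by (rule sum.cong) auto
  also have "\<dots> = 1\<^sub>m N $$ (a, b)" using a b by (simp add: sum.delta)
  finally show "(transpose_mat (pm N \<sigma>) * pm N \<sigma>) $$ (a, b) = 1\<^sub>m N $$ (a, b)" .
qed (auto simp: pm_def)

lemma tvec_surj: "dim_vec (v :: real vec) = prod_list n \<Longrightarrow> tvec (\<lambda>j. v $ (ivec j n - 1)) n = v"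
  unfolding tvec_def by (rule eq_vecI) (auto simp: ivec_univec')

lemma perm_mat_pm: "perm_mat P N \<longleftrightarrow> (\<exists>\<sigma>. \<sigma> permutes {..<N} \<and> P = pm N \<sigma>)"
  by (simp add: perm_mat_def pm_def)

lemma Pmat_char: assumes K: "blocking K n"
  shows "\<exists>\<sigma>. \<sigma> permutes {..<prod_list n} \<and> Pmat n K = pm (prod_list n) \<sigma>"
proof -
  define N where "N = prod_list n"
  define L where "L = Lst K"
  have lL: "length L = N" unfolding L_def N_def by (rule Lst_len[OF K])
  have sL: "set L = idx_set n" unfolding L_def by (rule Lst_set[OF K])
  have dL: "distinct L" unfolding L_def by (rule Lst_distinct)
  define \<sigma> where "\<sigma> a = (if a < N then ivec (L!a) n - 1 else a)" for a
  have b1: "bij_betw ((!) L) {..<N} (idx_set n)" by (rule bij_betw_nth[OF dL]) (use lL sL in auto)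
  have b2: "bij_betw (\<lambda>i. ivec i n) (idx_set n) {1..N}" unfolding bij_betw_def N_def
    using ivec_inj ivec_img by blast
  have b3: "bij_betw (\<lambda>x. x - 1) {1..N} {..<N}"
    by (rule bij_betwI[where g=Suc]) auto
  have "bij_betw ((\<lambda>x. x - 1) \<circ> ((\<lambda>i. ivec i n) \<circ> (!) L)) {..<N} {..<N}"
    by (rule bij_betw_trans[OF bij_betw_trans[OF b1 b2] b3])
  then have "bij_betw \<sigma> {..<N} {..<N}"
    by (rule bij_betw_cong[THEN iffD1, rotated]) (simp add: \<sigma>_def)
  then have s: "\<sigma> permutes {..<N}" by (rule bij_imp_permutes) (simp add: \<sigma>_def)
  have Lin: "a < N \<Longrightarrow> L!a \<in> idx_set n" for a using sL lL by auto
  have ex: "pm N \<sigma> *\<^sub>v tvec X n = tvec_blk X K" for X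
  proof -
    have "pm N \<sigma> *\<^sub>v tvec X n = vec N (\<lambda>a. tvec X n $ \<sigma> a)"
      by (rule pm_mult_vec[OF s]) (simp add: tvec_def N_def)
    also have "\<dots> = vec_of_list (map X L)"
    proof (rule eq_vecI)
      fix a assume "a < dim_vec (vec_of_list (map X L))"
      then have a: "a < N" using lL by simp
      have sa: "\<sigma> a < N" using permutes_in_image[OF s, of a] a by simp
      have "tvec X n $ \<sigma> a = X (univec (\<sigma> a + 1) n)" using sa by (simp add: tvec_def N_def)
      also have "\<sigma> a + 1 = ivec (L!a) n" using a ivec_ge1[of "L!a" n] by (simp add: \<sigma>_def)
      also have "univec (ivec (L!a) n) n = L!a" by (rule univec_ivec[OF Lin[OF a]])
      finally show "vec N (\<lambda>a. tvec X n $ \<sigma> a) $ a = vec_of_list (map X L) $ a"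
        using a lL by (simp add: vec_of_list_index)
    qed (simp add: lL)
    finally show ?thesis unfolding tvec_blk_eq L_def .
  qed
  have uniq: "P' = pm N \<sigma>" if P': "perm_mat P' N \<and> (\<forall>X. P' *\<^sub>v tvec X n = tvec_blk X K)" for P'
  proof -
    obtain \<tau> where t: "\<tau> permutes {..<N}" and P'e: "P' = pm N \<tau>" using P' unfolding perm_mat_pm by blast
    have eqv: "vec N (\<lambda>a. v $ \<tau> a) = vec N (\<lambda>a. v $ \<sigma> a)" if v: "dim_vec v = N" for v :: "real vec"
    proof -
      have "tvec (\<lambda>j. v $ (ivec j n - 1)) n = v" using v by (intro tvec_surj) (simp add: N_def)
      then have "P' *\<^sub>v v = pm N \<sigma> *\<^sub>v v" using P' ex[of "\<lambda>j. v $ (ivec j n - 1)"] by metis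
      then show ?thesis using pm_mult_vec[OF s v] pm_mult_vec[OF t v] P'e by simp
    qed
    have "\<tau> a = \<sigma> a" if a: "a < N" for a
    proof -
      have sa: "\<sigma> a < N" "\<tau> a < N" using permutes_in_image[OF s, of a] permutes_in_image[OF t, of a] a by auto
      have "vec N (\<lambda>a'. unit_vec N (\<sigma> a) $ \<tau> a') = vec N (\<lambda>a'. (unit_vec N (\<sigma> a) :: real vec) $ \<sigma> a')"
        by (rule eqv) simp
      then have "vec N (\<lambda>a'. unit_vec N (\<sigma> a) $ \<tau> a') $ a = vec N (\<lambda>a'. (unit_vec N (\<sigma> a) :: real vec) $ \<sigma> a') $ a"
        by (rule arg_cong)
      then have "unit_vec N (\<sigma> a) $ \<tau> a = (1::real)" using a sa by simp
      then show ?thesis using sa by (simp split: if_splits)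
    qed
    then show ?thesis unfolding P'e by (auto simp: pm_def)
  qed
  have "perm_mat (pm N \<sigma>) N \<and> (\<forall>X. pm N \<sigma> *\<^sub>v tvec X n = tvec_blk X K)"
    using s ex unfolding perm_mat_pm by blast
  then have "Pmat n K = pm N \<sigma>" unfolding Pmat_def N_def[symmetric]
    by (rule the_equality) (rule uniq)
  then show ?thesis using s unfolding N_def by blast
qed

lemma Pmat_props: assumes K: "blocking K n"
  shows "Pmat n K \<in> carrier_mat (prod_list n) (prod_list n)"
    "transpose_mat (Pmat n K) * Pmat n K = 1\<^sub>m (prod_list n)"
  using Pmat_char[OF K] pm_orth by (auto simp: pm_def)

lemma sel_blocking: assumes S: "blocking S \<alpha>" and r: "set r \<subseteq> {1..length \<alpha>}"
  shows "blocking (sel S r) (sel \<alpha> r)"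
  unfolding blocking_def
proof (intro conjI allI impI)
  show "length (sel S r) = length (sel \<alpha> r)" by (simp add: sel_def)
  fix k assume k: "k < length (sel \<alpha> r)"
  then have k': "k < length r" by (simp add: sel_def)
  then have "r!k \<in> set r" by simp
  then have "r!k \<in> {1..length \<alpha>}" using r by blast
  then have rk: "r!k - 1 < length \<alpha>" by (simp only: atLeastAtMost_iff) arith
  have "length S = length \<alpha>" using S by (simp add: blocking_def)
  then show "\<forall>x\<in>set (sel S r ! k). 0 < x" "sum_list (sel S r ! k) = sel \<alpha> r ! k"
    using S rk k' by (simp_all add: blocking_def sel_def)
qed

lemma sel_upt: "m + k \<le> length v \<Longrightarrow> sel v [m+1..<m+k+1] = take k (drop m v)"
  by (rule nth_equalityI) (auto simp del: upt_Suc simp: sel_def)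

lemma sel_app1: "sel (xs @ ys) [1..<length xs + 1] = xs"
  using sel_upt[of 0 "length xs" "xs @ ys"] by simp

lemma sel_app2: "sel (xs @ ys) [length xs + 1..<length xs + length ys + 1] = ys"
  using sel_upt[of "length xs" "length ys" "xs @ ys"] by simp

lemma ptrans_id: assumes "length j = d" shows "ptrans X [1..<d+1] j = X j"
proof -
  have m: "map (\<lambda>k. i ! (k - 1)) [1..<d+1] = i" if "length i = d" for i :: "nat list"
    by (rule nth_equalityI) (use that in \<open>auto simp del: upt_Suc\<close>)
  have "(THE i. length i = length [1..<d+1] \<and> map (\<lambda>k. i ! (k - 1)) [1..<d+1] = j) = j"
    by (rule the_equality) (use assms m in \<open>auto simp del: upt_Suc\<close>)
  then show ?thesis unfolding ptrans_def by simp
qed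

lemma cancel_lemma:
  fixes R A Q B C :: "real mat"
  assumes R: "R \<in> carrier_mat m m" and A: "A \<in> carrier_mat m k" and Q: "Q \<in> carrier_mat k k"
    and QQ: "transpose_mat Q * Q = 1\<^sub>m k" and B: "B \<in> carrier_mat k j" and C: "C \<in> carrier_mat j j"
  shows "(R * A * transpose_mat Q) * (Q * B * transpose_mat C) = R * (A * B) * transpose_mat C"
proof -
  have QT: "transpose_mat Q \<in> carrier_mat k k" using Q by simp
  have CT: "transpose_mat C \<in> carrier_mat j j" using C by simp
  have RA: "R * A \<in> carrier_mat m k" using R A by simp
  have RAQ: "R * A * transpose_mat Q \<in> carrier_mat m k" using RA QT by simp
  have BC: "B * transpose_mat C \<in> carrier_mat k j" using B CT by simp
  have "Q * B * transpose_mat C = Q * (B * transpose_mat C)" by (rule assoc_mult_mat[OF Q B CT])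
  moreover have "(R * A * transpose_mat Q) * (Q * (B * transpose_mat C)) = ((R * A * transpose_mat Q) * Q) * (B * transpose_mat C)"
    by (rule assoc_mult_mat[OF RAQ Q BC, symmetric])
  moreover have "(R * A * transpose_mat Q) * Q = R * A"
  proof -
    have "(R * A * transpose_mat Q) * Q = (R * A) * (transpose_mat Q * Q)" by (rule assoc_mult_mat[OF RA QT Q])
    then show ?thesis using QQ right_mult_one_mat[OF RA] by simp
  qed
  moreover have "(R * A) * (B * transpose_mat C) = R * (A * (B * transpose_mat C))" by (rule assoc_mult_mat[OF R A BC])
  moreover have "A * (B * transpose_mat C) = (A * B) * transpose_mat C" by (rule assoc_mult_mat[OF A B CT, symmetric])
  moreover have "R * ((A * B) * transpose_mat C) = (R * (A * B)) * transpose_mat C"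
    using A B by (intro assoc_mult_mat[OF R _ CT, symmetric]) simp
  ultimately show ?thesis by simp
qed

theorem corollary4p2:
  fixes f g l :: nat
    and \<alpha> \<beta> p q :: "nat list"
    and F G H :: tensor
    and S T :: "nat list list"
  assumes len_\<alpha>: "length \<alpha> = f + l"
    and len_\<beta>: "length \<beta> = g + l"
    and p: "is_perm p (f + l)"
    and q: "is_perm q (g + l)"
    and dims: "sel \<alpha> (drop f p) = sel \<beta> (take l q)"
    and H: "\<forall>i\<in>idx_set (sel \<alpha> (take f p)). \<forall>j\<in>idx_set (sel \<beta> (drop l q)).
              H (i @ j) = (\<Sum>k\<in>idx_set (sel \<alpha> (drop f p)).
                             ptrans F p (i @ k) * ptrans G q (k @ j))"
    and S: "blocking S \<alpha>"
    and T: "blocking T \<beta>"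
    and ST: "\<forall>k<l. S ! (drop f p ! k - 1) = T ! (take l q ! k - 1)"
  shows "blk_unfolding H (sel \<alpha> (take f p) @ sel \<beta> (drop l q))
            (sel S (take f p) @ sel T (drop l q)) [1..<f + 1] [f + 1..<f + g + 1]
       = blk_unfolding F \<alpha> S (take f p) (drop f p) * blk_unfolding G \<beta> T (take l q) (drop l q)"
proof -
  define r where "r = take f p"
  define lam where "lam = drop f p"
  define psi where "psi = take l q"
  define c where "c = drop l q"
  have lp: "length p = f + l" using p distinct_card[of p] unfolding is_perm_def by force
  have lq: "length q = g + l" using q distinct_card[of q] unfolding is_perm_def by force
  have lr: "length r = f" "length lam = l" "length psi = l" "length c = g"
    using lp lq by (simp_all add: r_def lam_def psi_def c_def)
  have sp: "set p \<subseteq> {1..length \<alpha>}" using p len_\<alpha> unfolding is_perm_def by simp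
  have sq: "set q \<subseteq> {1..length \<beta>}" using q len_\<beta> unfolding is_perm_def by simp
  have sr: "set r \<subseteq> {1..length \<alpha>}" "set lam \<subseteq> {1..length \<alpha>}"
    using sp set_take_subset[of f p] set_drop_subset[of f p] unfolding r_def lam_def by blast+
  have sc: "set psi \<subseteq> {1..length \<beta>}" "set c \<subseteq> {1..length \<beta>}"
    using sq set_take_subset[of l q] set_drop_subset[of l q] unfolding psi_def c_def by blast+
  have bR: "blocking (sel S r) (sel \<alpha> r)" by (rule sel_blocking[OF S sr(1)])
  have bL: "blocking (sel S lam) (sel \<alpha> lam)" by (rule sel_blocking[OF S sr(2)])
  have bC: "blocking (sel T c) (sel \<beta> c)" by (rule sel_blocking[OF T sc(2)])
  have dims': "sel \<alpha> lam = sel \<beta> psi" using dims unfolding lam_def psi_def .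
  have SL: "sel S lam = sel T psi"
  proof (rule nth_equalityI)
    show "length (sel S lam) = length (sel T psi)" using lr by (simp add: sel_def)
    fix k assume "k < length (sel S lam)"
    then have k: "k < l" using lr by (simp add: sel_def)
    show "sel S lam ! k = sel T psi ! k" using ST k lr by (simp add: sel_def lam_def psi_def)
  qed
  define NR where "NR = prod_list (sel \<alpha> r)"
  define NL where "NL = prod_list (sel \<alpha> lam)"
  define NC where "NC = prod_list (sel \<beta> c)"
  define PR where "PR = Pmat (sel \<alpha> r) (sel S r)"
  define PL where "PL = Pmat (sel \<alpha> lam) (sel S lam)"
  define PC where "PC = Pmat (sel \<beta> c) (sel T c)"
  have PR: "PR \<in> carrier_mat NR NR" unfolding PR_def NR_def by (rule Pmat_props(1)[OF bR])
  have PL: "PL \<in> carrier_mat NL NL" unfolding PL_def NL_def by (rule Pmat_props(1)[OF bL])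
  have PLL: "transpose_mat PL * PL = 1\<^sub>m NL" unfolding PL_def NL_def by (rule Pmat_props(2)[OF bL])
  have PC: "PC \<in> carrier_mat NC NC" unfolding PC_def NC_def by (rule Pmat_props(1)[OF bC])
  define Fu where "Fu = tunfold F \<alpha> r lam"
  define Gu where "Gu = tunfold G \<beta> psi c"
  define n' where "n' = sel \<alpha> r @ sel \<beta> c"
  define S' where "S' = sel S r @ sel T c"
  define Hu where "Hu = tunfold H n' [1..<f + 1] [f + 1..<f + g + 1]"
  have lsr: "length (sel \<alpha> r) = f" "length (sel \<beta> c) = g" "length (sel S r) = f" "length (sel T c) = g"
    using lr by (simp_all add: sel_def)
  have n1: "sel n' [1..<f + 1] = sel \<alpha> r" using sel_app1[of "sel \<alpha> r" "sel \<beta> c"] lsr unfolding n'_def by simp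
  have n2: "sel n' [f + 1..<f + g + 1] = sel \<beta> c" using sel_app2[of "sel \<alpha> r" "sel \<beta> c"] lsr unfolding n'_def by simp
  have s1: "sel S' [1..<f + 1] = sel S r" using sel_app1[of "sel S r" "sel T c"] lsr unfolding S'_def by simp
  have s2: "sel S' [f + 1..<f + g + 1] = sel T c" using sel_app2[of "sel S r" "sel T c"] lsr unfolding S'_def by simp
  have Fu: "Fu \<in> carrier_mat NR NL" unfolding Fu_def tunfold_def NR_def NL_def by simp
  have Gu: "Gu \<in> carrier_mat NL NC" unfolding Gu_def tunfold_def NL_def NC_def dims' by simp
  have pe: "r @ lam = p" "psi @ c = q" unfolding r_def lam_def psi_def c_def by simp_all
  have HFG: "Hu = Fu * Gu"
  proof (rule eq_matI)
    show "dim_row Hu = dim_row (Fu * Gu)" using Fu unfolding Hu_def tunfold_def n1 NR_def by simp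
    show "dim_col Hu = dim_col (Fu * Gu)" using Gu unfolding Hu_def tunfold_def n2 NC_def by simp
    fix a b assume "a < dim_row (Fu * Gu)" "b < dim_col (Fu * Gu)"
    then have a: "a < NR" and b: "b < NC" using Fu Gu by auto
    define ia where "ia = univec (a+1) (sel \<alpha> r)"
    define jb where "jb = univec (b+1) (sel \<beta> c)"
    have ia: "ia \<in> idx_set (sel \<alpha> r)" unfolding ia_def using univec_in a NR_def by simp
    have jb: "jb \<in> idx_set (sel \<beta> c)" unfolding jb_def using univec_in b NC_def by simp
    have lia: "length ia = f" using ia lsr by (simp add: idx_set_def)
    have ljb: "length jb = g" using jb lsr by (simp add: idx_set_def)
    have "Hu $$ (a, b) = ptrans H ([1..<f + 1] @ [f + 1..<f + g + 1]) (ia @ jb)"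
      unfolding Hu_def tunfold_def n1 n2 ia_def jb_def using a b NR_def NC_def by simp
    also have "[1..<f + 1] @ [f + 1..<f + g + 1] = [1..<(f+g)+1]" using upt_add_eq_append[of 1 "f+1" g] by (simp del: upt_Suc add: ac_simps)
    also have "ptrans H [1..<(f+g)+1] (ia @ jb) = H (ia @ jb)" by (rule ptrans_id) (simp add: lia ljb)
    also have "\<dots> = (\<Sum>k\<in>idx_set (sel \<alpha> lam). ptrans F p (ia @ k) * ptrans G q (k @ jb))"
      using H ia jb unfolding r_def lam_def c_def by blast
    also have "\<dots> = (\<Sum>t\<in>{..<NL}. ptrans F p (ia @ univec (t+1) (sel \<alpha> lam)) * ptrans G q (univec (t+1) (sel \<alpha> lam) @ jb))"
      unfolding NL_def by (rule sum.reindex_bij_betw[OF univec_bij, symmetric])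
    also have "\<dots> = (Fu * Gu) $$ (a, b)"
    proof -
      have "(Fu * Gu) $$ (a, b) = (\<Sum>t\<in>{0..<NL}. Fu $$ (a, t) * Gu $$ (t, b))"
        using a b Fu Gu by (simp add: scalar_prod_def)
      also have "\<dots> = (\<Sum>t\<in>{..<NL}. ptrans F p (ia @ univec (t+1) (sel \<alpha> lam)) * ptrans G q (univec (t+1) (sel \<alpha> lam) @ jb))"
        unfolding atLeast0LessThan
      proof (rule sum.cong[OF refl])
        fix t assume "t \<in> {..<NL}"
        then have t: "t < NL" by simp
        show "Fu $$ (a, t) * Gu $$ (t, b) = ptrans F p (ia @ univec (t+1) (sel \<alpha> lam)) * ptrans G q (univec (t+1) (sel \<alpha> lam) @ jb)"
          using a b t unfolding Fu_def Gu_def tunfold_def ia_def jb_def NR_def NL_def NC_def dims'[symmetric] pe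
          by (simp add: dims')
      qed
      finally show ?thesis by simp
    qed
    finally show "Hu $$ (a, b) = (Fu * Gu) $$ (a, b)" .
  qed
  have "blk_unfolding H n' S' [1..<f + 1] [f + 1..<f + g + 1] = PR * Hu * transpose_mat PC"
    unfolding blk_unfolding_def n1 n2 s1 s2 PR_def PC_def Hu_def ..
  also have "\<dots> = (PR * Fu * transpose_mat PL) * (PL * Gu * transpose_mat PC)"
    unfolding HFG by (rule cancel_lemma[OF PR Fu PL PLL Gu PC, symmetric])
  also have "\<dots> = blk_unfolding F \<alpha> S r lam * blk_unfolding G \<beta> T psi c"
    unfolding blk_unfolding_def PR_def PL_def PC_def Fu_def Gu_def dims' SL ..
  finally show ?thesis unfolding n'_def S'_def r_def lam_def psi_def c_def .
qed

end
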